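(* Let $\lambda\in(g,1)$ with $g=\frac{\sqrt5-1}{2}$, let $\ell\in\mathbb{N}$ satisfy $1<\lambda^2+\cdots+\lambda^\ell$, and let $\mathcal{U}$ and $\mathcal{U}_a$ be as in the context. There exists a constant $c$ with $0<c<\lambda^\ell|\mathcal{U}|/4$ such that for every $n\ge1$ and every $a\in\{0,1\}^{(n-1)\ell}$, if $J\subset\mathcal{U}_a$ is an interval with $|J|\le c\lambda^{n\ell}$, then there exist $a',a''\in\{0,1\}^{\ell-1}$ with $$J\subset\mathcal{U}_{aa'0}\cap\mathcal{U}_{aa''1}.$$
   Context: For a finite word $a=a_1\dots a_n$ over $\{0,1\}$, $\xi(a)=\sum_{j=1}^n a_j\lambda^j$. Let $\mathcal{U}=(\alpha,\beta)$ with $\alpha=\frac{\lambda^\ell}{1-\lambda^\ell}$ and $\beta=\frac{\lambda}{1-\lambda}-\frac{\lambda^\ell}{1-\lambda^\ell}$, and for $a\in\{0,1\}^n$ let $\mathcal{U}_a=\xi(a)+\lambda^n\mathcal{U}$. Juxtaposition $aa'0$ denotes concatenation of words. $|J|$ denotes the length of an interval $J$. *)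

theory Defs
  imports "HOL-Analysis.Analysis"
begin

definition binword :: "nat list \<Rightarrow> bool" where
  "binword a \<longleftrightarrow> set a \<subseteq> {0, 1}"

definition xi :: "real \<Rightarrow> nat list \<Rightarrow> real" where
  "xi lam a = (\<Sum>j<length a. real (a ! j) * lam ^ (j + 1))"

definition alphaU :: "real \<Rightarrow> nat \<Rightarrow> real" where
  "alphaU lam l = lam ^ l / (1 - lam ^ l)"

definition betaU :: "real \<Rightarrow> nat \<Rightarrow> real" where
  "betaU lam l = lam / (1 - lam) - lam ^ l / (1 - lam ^ l)"

definition UU :: "real \<Rightarrow> nat \<Rightarrow> real set" where
  "UU lam l = {alphaU lam l <..< betaU lam l}"

definition Ua :: "real \<Rightarrow> nat \<Rightarrow> nat list \<Rightarrow> real set" where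
  "Ua lam l a = (\<lambda>u. xi lam a + lam ^ length a * u) ` UU lam l"

definition ilen :: "real set \<Rightarrow> real" where
  "ilen J = Sup J - Inf J"

end

theory Submission
  imports Defs
begin

lemma xi_snoc: "xi lam (w @ [d]) = xi lam w + real d * lam ^ (length w + 1)"
  unfolding xi_def by (simp add: nth_append lessThan_Suc)

lemma xi_single[simp]: "xi lam [d] = real d * lam"
  unfolding xi_def by simp

lemma xi_append: "xi lam (a @ b) = xi lam a + lam ^ length a * xi lam b"
proof (induction b rule: rev_induct)
  case Nil then show ?case by (simp add: xi_def)
next
  case (snoc x xs)
  have "xi lam (a @ xs @ [x]) = xi lam ((a @ xs) @ [x])" by simp
  also have "\<dots> = xi lam (a @ xs) + real x * lam ^ (length a + length xs + 1)"
    by (simp only: xi_snoc length_append)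
  also have "\<dots> = xi lam a + lam ^ length a * xi lam xs + real x * lam ^ (length a + length xs + 1)"
    using snoc by simp
  also have "\<dots> = xi lam a + lam ^ length a * xi lam (xs @ [x])"
    by (simp add: xi_snoc algebra_simps power_add)
  finally show ?case .
qed

lemma rep_snoc: "replicate (Suc m) x = replicate m x @ [x]"
  by (simp add: replicate_append_same)

lemma xi_rep0: "xi lam (replicate m 0) = 0"
  unfolding xi_def by simp

lemma xi_rep1: "xi lam (replicate m 1) * (1 - lam) = lam - lam ^ (m + 1)"
proof (induction m)
  case 0 then show ?case by (simp add: xi_def)
next
  case (Suc m)
  have eq: "xi lam (replicate (Suc m) 1) = xi lam (replicate m 1) + lam ^ (m + 1)"
    by (simp only: rep_snoc xi_snoc length_replicate)
  show ?case unfolding eq using Suc.IH by (simp add: algebra_simps) (metis distrib_left)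
qed

lemma binword_rep: "d \<in> {0,1} \<Longrightarrow> binword (replicate m d)"
  unfolding binword_def by auto

lemma binword_app: "binword (a @ b) \<longleftrightarrow> binword a \<and> binword b"
  unfolding binword_def by auto

lemma affine_img:
  fixes K :: real assumes "K > 0"
  shows "(\<lambda>u. s + K * u) ` {a<..<b} = {s + K * a <..< s + K * b}"
proof
  show "(\<lambda>u. s + K * u) ` {a<..<b} \<subseteq> {s + K * a <..< s + K * b}"
    using assms by auto
  show "{s + K * a <..< s + K * b} \<subseteq> (\<lambda>u. s + K * u) ` {a<..<b}"
  proof
    fix z assume z: "z \<in> {s + K * a <..< s + K * b}"
    have "z = s + K * ((z - s) / K)" using assms by simp
    moreover have "(z - s) / K \<in> {a<..<b}" using z assms by (auto simp: field_simps)
    ultimately show "z \<in> (\<lambda>u. s + K * u) ` {a<..<b}" by blast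
  qed
qed

lemma Ua_eq: "lam > 0 \<Longrightarrow> Ua lam l w = {xi lam w + lam ^ length w * alphaU lam l <..< xi lam w + lam ^ length w * betaU lam l}"
  unfolding Ua_def UU_def by (rule affine_img) simp

lemma cover:
  fixes lam :: real
  assumes "1/2 \<le> lam" "lam < 1"
  shows "\<forall>t>0. \<exists>w. binword w \<and> length w = m \<and> xi lam w < t \<and> (t - lam ^ m \<le> xi lam w \<or> w = replicate m 1)"
proof (induction m)
  case 0 then show ?case by (auto simp: xi_def binword_def)
next
  case (Suc m)
  show ?case
  proof (intro allI impI)
    fix t :: real assume t: "t > 0"
    then obtain w where w: "binword w" "length w = m" "xi lam w < t"
      "t - lam ^ m \<le> xi lam w \<or> w = replicate m 1" using Suc by blast
    have lp: "lam ^ m - lam ^ Suc m \<le> lam ^ Suc m"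
    proof -
      have "lam ^ m * (1 - lam) \<le> lam ^ m * lam"
        using assms by (intro mult_left_mono) auto
      then show ?thesis by (simp add: algebra_simps)
    qed
    show "\<exists>w. binword w \<and> length w = Suc m \<and> xi lam w < t \<and> (t - lam ^ Suc m \<le> xi lam w \<or> w = replicate (Suc m) 1)"
    proof (cases "xi lam w + lam ^ Suc m < t")
      case True
      have "binword (w @ [1])" using w by (simp add: binword_app binword_def)
      moreover have "xi lam (w @ [1]) = xi lam w + lam ^ Suc m" using w by (simp add: xi_snoc)
      moreover have "t - lam ^ Suc m \<le> xi lam (w @ [1]) \<or> w @ [1] = replicate (Suc m) 1"
        using w(4) lp True \<open>xi lam (w @ [1]) = _\<close> by (auto simp only: rep_snoc)
      ultimately show ?thesis using True w by (intro exI[of _ "w @ [1]"]) auto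
    next
      case False
      have "binword (w @ [0])" using w by (simp add: binword_app binword_def)
      moreover have "xi lam (w @ [0]) = xi lam w" by (simp add: xi_snoc)
      ultimately show ?thesis using False w by (intro exI[of _ "w @ [0]"]) auto
    qed
  qed
qed

lemma gen:
  fixes lam K A B lo hi s delta x0 :: real
  assumes lam: "1/2 \<le> lam" "lam < 1" and K: "K > 0"
    and Alo: "A \<le> lo" and hiB: "hi \<le> xi lam (replicate m 1) + B"
    and dl: "2 * delta < B - A - lam ^ m"
    and near: "\<forall>z\<in>J. \<bar>z - x0\<bar> \<le> K * delta"
    and inU: "\<forall>z\<in>J. s + K * lo < z \<and> z < s + K * hi"
  shows "\<exists>w. binword w \<and> length w = m \<and> (\<forall>z\<in>J. s + K * (xi lam w + A) < z \<and> z < s + K * (xi lam w + B))"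
proof -
  define t where "t = (x0 - s) / K - delta - A"
  have nz: "\<And>z. z \<in> J \<Longrightarrow> t + A \<le> (z - s) / K \<and> (z - s) / K \<le> t + A + 2 * delta"
  proof -
    fix z assume z: "z \<in> J"
    have "\<bar>z - x0\<bar> \<le> K * delta" using near z by blast
    then have "\<bar>(z - s) / K - (x0 - s) / K\<bar> \<le> delta" using K
      by (simp add: diff_divide_distrib[symmetric] abs_divide field_simps)
    then show "t + A \<le> (z - s) / K \<and> (z - s) / K \<le> t + A + 2 * delta"
      unfolding t_def by linarith
  qed
  have nU: "\<And>z. z \<in> J \<Longrightarrow> lo < (z - s) / K \<and> (z - s) / K < hi"
    using inU K by (auto simp: field_simps)
  have bk: "\<And>z q. z \<in> J \<Longrightarrow> (s + K * q < z \<longleftrightarrow> q < (z - s) / K) \<and> (z < s + K * q \<longleftrightarrow> (z - s) / K < q)"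
    using K by (auto simp: field_simps)
  have lm: "lam ^ m \<ge> 0" using lam by simp
  show ?thesis
  proof (cases "t > 0")
    case True
    then obtain w where w: "binword w" "length w = m" "xi lam w < t"
      "t - lam ^ m \<le> xi lam w \<or> w = replicate m 1" using cover[OF lam] by blast
    have "\<forall>z\<in>J. xi lam w + A < (z - s) / K \<and> (z - s) / K < xi lam w + B"
    proof
      fix z assume z: "z \<in> J"
      show "xi lam w + A < (z - s) / K \<and> (z - s) / K < xi lam w + B"
        using w(3,4) nz[OF z] nU[OF z] dl hiB by auto
    qed
    then show ?thesis using w bk by (intro exI[of _ w]) auto
  next
    case False
    have "\<forall>z\<in>J. xi lam (replicate m 0) + A < (z - s) / K \<and> (z - s) / K < xi lam (replicate m 0) + B"
    proof
      fix z assume z: "z \<in> J"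
      show "xi lam (replicate m 0) + A < (z - s) / K \<and> (z - s) / K < xi lam (replicate m 0) + B"
        using False nz[OF z] nU[OF z] dl Alo lm by (simp add: xi_rep0)
    qed
    then show ?thesis using bk binword_rep[of 0 m]
      by (intro exI[of _ "replicate m 0"]) auto
  qed
qed

lemma geo: fixes lam :: real shows "2 \<le> l \<Longrightarrow> (\<Sum>k\<in>{2..l}. lam ^ k) * (1 - lam) = lam ^ 2 - lam ^ (l + 1)"
proof (induction l)
  case 0 then show ?case by simp
next
  case (Suc l)
  show ?case
  proof (cases "l < 2")
    case True
    then have "Suc l = 2" using Suc.prems by simp
    then have "l = 1" by simp
    then show ?thesis by (simp add: power2_eq_square power3_eq_cube algebra_simps)
  next
    case False
    then have "{2..Suc l} = insert (Suc l) {2..l}" by auto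
    then show ?thesis using Suc.IH False by (simp add: algebra_simps) (metis distrib_left)
  qed
qed

lemma key_ineq:
  fixes lam u :: real
  assumes "1/2 < lam" "lam < 1" "0 < u" "u < 1" "lam ^ 2 - lam * u > 1 - lam"
  shows "lam * (lam / (1 - lam) - 2 * u / (1 - u)) > 1"
proof -
  have u2: "u \<le> 2 * lam - 1"
  proof -
    have "lam * u < lam ^ 2 + lam - 1" using assms(5) by simp
    also have "\<dots> \<le> lam * (2 * lam - 1)"
    proof -
      have "0 \<le> (lam - 1) ^ 2" by simp
      then show ?thesis by (simp add: power2_eq_square algebra_simps)
    qed
    finally have "lam * u < lam * (2 * lam - 1)" .
    then show ?thesis using assms(1) by simp
  qed
  have h: "lam^2 * (1 - u) - 2 * lam * u * (1 - lam) > (1 - lam) * (1 - u)"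
  proof -
    have "lam^2 * (1 - u) > (1 - lam + lam * u) * (1 - u)"
      using assms by (intro mult_strict_right_mono) auto
    moreover have "lam * u * (2 * lam - 1 - u) \<ge> 0" using assms u2 by simp
    ultimately show ?thesis by (simp add: algebra_simps)
  qed
  have "lam * (lam / (1 - lam) - 2 * u / (1 - u)) = (lam^2 * (1 - u) - 2 * lam * u * (1 - lam)) / ((1 - lam) * (1 - u))"
    using assms by (simp add: field_simps power2_eq_square)
  also have "\<dots> > 1"
  proof -
    have pos: "(1 - lam) * (1 - u) > 0" using assms by simp
    show ?thesis by (subst less_divide_eq_1_pos[OF pos]) (rule h)
  qed
  finally show ?thesis .
qed

theorem corollary3p2:
  fixes lam :: real and l :: nat
  assumes "(sqrt 5 - 1) / 2 < lam" and "lam < 1"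
    and "1 < (\<Sum>k\<in>{2..l}. lam ^ k)"
  shows "\<exists>c::real. 0 < c \<and> c < lam ^ l * (betaU lam l - alphaU lam l) / 4 \<and>
     (\<forall>n\<ge>1. \<forall>a. binword a \<and> length a = (n - 1) * l \<longrightarrow>
        (\<forall>J. is_interval J \<and> J \<subseteq> Ua lam l a \<and> ilen J \<le> c * lam ^ (n * l) \<longrightarrow>
           (\<exists>a' a''. binword a' \<and> length a' = l - 1 \<and> binword a'' \<and> length a'' = l - 1 \<and>
              J \<subseteq> Ua lam l (a @ a' @ [0]) \<inter> Ua lam l (a @ a'' @ [1]))))"
proof -
  have s5: "sqrt 5 > 2" by (rule real_less_rsqrt) simp
  have "(sqrt 5 - 1) / 2 > 1 / 2" using s5 by simp
  then have lam2: "1/2 < lam" using assms(1) by linarith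
  have lam0: "0 < lam" using lam2 by simp
  have l2: "2 \<le> l"
  proof (rule ccontr)
    assume "\<not> 2 \<le> l" then have "{2..l} = {}" by auto
    then show False using assms(3) by simp
  qed
  define u where "u = lam ^ l"
  have u0: "0 < u" "u < 1" unfolding u_def using lam0 assms(2) l2 by (auto simp: power_less_one_iff)
  have hyp: "lam ^ 2 - lam * u > 1 - lam"
  proof -
    have "(\<Sum>k\<in>{2..l}. lam ^ k) * (1 - lam) > 1 * (1 - lam)"
      using assms(2,3) by (intro mult_strict_right_mono) auto
    then show ?thesis using geo[OF l2, of lam] unfolding u_def by simp
  qed
  define al where "al = alphaU lam l"
  define be where "be = betaU lam l"
  have al: "al = u / (1 - u)" unfolding al_def alphaU_def u_def by simp
  have be: "be = lam / (1 - lam) - u / (1 - u)" unfolding be_def betaU_def u_def by simp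
  define D where "D = be - al"
  have LD: "lam * D > 1" unfolding D_def al be using key_ineq[OF lam2 assms(2) u0 hyp] by simp
  have al0: "al > 0" using al u0 by simp
  have alu: "u + u * al = al" unfolding al using u0 by (simp add: field_simps)
  define X where "X = xi lam (replicate (l - 1) 1)"
  have X: "X + u * be = be"
  proof -
    have "X * (1 - lam) = lam - lam ^ l" unfolding X_def using xi_rep1[of lam "l - 1"] l2 by simp
    then have "X = (lam - u) / (1 - lam)" unfolding u_def using assms(2) by (simp add: field_simps)
    moreover have "(1 - u) * be = (lam - u) / (1 - lam)"
    proof -
      have "(1 - u) * be = (1 - u) * lam / (1 - lam) - u" unfolding be using u0 by (simp add: right_diff_distrib)
      also have "\<dots> = (lam - u) / (1 - lam)" using assms(2) by (simp add: field_simps)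
      finally show ?thesis .
    qed
    ultimately show ?thesis by (simp add: algebra_simps)
  qed
  have ul: "lam ^ (l - 1) = u / lam"
  proof -
    have "l = Suc (l - 1)" using l2 by simp
    then have "u = lam * lam ^ (l - 1)" unfolding u_def by (metis power_Suc)
    then show ?thesis using lam0 by simp
  qed
  have pl: "lam ^ (l - 1) * lam = lam ^ l"
  proof -
    have "l = Suc (l - 1)" using l2 by simp
    then show ?thesis by (metis power_Suc2)
  qed
  define c where "c = u * (D - 1 / lam) / 4"
  have D1: "D - 1 / lam > 0" using LD lam0 by (simp add: field_simps)
  have c0: "c > 0" unfolding c_def using D1 u0 by simp
  have cless: "c < u * D / 4" unfolding c_def using u0 lam0 by (simp add: field_simps)
  have c2: "2 * (u * c) < u * D - lam ^ (l - 1)"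
  proof -
    have "u * (D - 1/lam) \<le> D - 1/lam" using D1 u0 by (intro mult_left_le_one_le) auto
    then have "c \<le> (D - 1/lam) / 4" unfolding c_def by simp
    then have "2 * c < D - 1 / lam" using D1 by simp
    then have "u * (2 * c) < u * (D - 1 / lam)" using u0 by simp
    then show ?thesis unfolding ul by (simp add: algebra_simps)
  qed
  show ?thesis
  proof (intro exI[of _ c] conjI allI impI)
    show "0 < c" by (rule c0)
    show "c < lam ^ l * (betaU lam l - alphaU lam l) / 4" using cless unfolding u_def D_def al_def be_def .
  next
    fix n :: nat and a :: "nat list" and J :: "real set"
    assume n: "1 \<le> n" and a: "binword a \<and> length a = (n - 1) * l"
      and J: "is_interval J \<and> J \<subseteq> Ua lam l a \<and> ilen J \<le> c * lam ^ (n * l)"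
    define K where "K = lam ^ ((n - 1) * l)"
    define s where "s = xi lam a"
    have K0: "K > 0" unfolding K_def using lam0 by simp
    have nl: "lam ^ (n * l) = K * u"
    proof -
      have "n * l = (n - 1) * l + l" using n by (metis Suc_diff_1 less_le_trans mult_Suc add.commute zero_less_one)
      then show ?thesis unfolding K_def u_def by (simp add: power_add)
    qed
    have UaA: "Ua lam l a = {s + K * al <..< s + K * be}"
      unfolding Ua_eq[OF lam0] s_def K_def al_def be_def using a by simp
    have inU: "\<forall>z\<in>J. s + K * al < z \<and> z < s + K * be" using J UaA by auto
    show "\<exists>a' a''. binword a' \<and> length a' = l - 1 \<and> binword a'' \<and> length a'' = l - 1 \<and>
              J \<subseteq> Ua lam l (a @ a' @ [0]) \<inter> Ua lam l (a @ a'' @ [1])"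
    proof (cases "J = {}")
      case True
      then show ?thesis using binword_rep[of 0 "l - 1"]
        by (intro exI[of _ "replicate (l - 1) 0"]) auto
    next
      case False
      then obtain x0 where x0: "x0 \<in> J" by blast
      have bdd: "bdd_above J" "bdd_below J" using inU
        by (auto intro!: bdd_aboveI[of _ "s + K * be"] bdd_belowI[of _ "s + K * al"] less_imp_le)
      have near: "\<forall>z\<in>J. \<bar>z - x0\<bar> \<le> K * (u * c)"
      proof
        fix z assume z: "z \<in> J"
        have "\<bar>z - x0\<bar> \<le> Sup J - Inf J"
          using cSup_upper[OF z bdd(1)] cInf_lower[OF z bdd(2)] cSup_upper[OF x0 bdd(1)] cInf_lower[OF x0 bdd(2)]
          by linarith
        also have "\<dots> \<le> c * lam ^ (n * l)" using J unfolding ilen_def by simp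
        also have "\<dots> = K * (u * c)" unfolding nl by simp
        finally show "\<bar>z - x0\<bar> \<le> K * (u * c)" .
      qed
      have ua: "u * al \<le> al" using u0 al0 by simp
      have hi0: "be \<le> xi lam (replicate (l - 1) 1) + u * be" using X unfolding X_def by simp
      obtain a' where a': "binword a'" "length a' = l - 1"
        "\<forall>z\<in>J. s + K * (xi lam a' + u * al) < z \<and> z < s + K * (xi lam a' + u * be)"
        using gen[OF less_imp_le[OF lam2] assms(2) K0 ua hi0 _ near inU] c2 unfolding D_def
        by (auto simp: algebra_simps)
      have alA: "u + u * al \<le> al" using alu by simp
      have hi1: "be \<le> xi lam (replicate (l - 1) 1) + (u + u * be)" using X u0 unfolding X_def by simp
      obtain a'' where a'': "binword a''" "length a'' = l - 1"
        "\<forall>z\<in>J. s + K * (xi lam a'' + (u + u * al)) < z \<and> z < s + K * (xi lam a'' + (u + u * be))"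
        using gen[OF less_imp_le[OF lam2] assms(2) K0 alA hi1 _ near inU] c2 unfolding D_def
        by (auto simp: algebra_simps)
      have U0: "Ua lam l (a @ a' @ [0]) = {s + K * (xi lam a' + u * al) <..< s + K * (xi lam a' + u * be)}"
      proof -
        have "xi lam (a @ a' @ [0]) = s + K * xi lam a'"
          unfolding xi_append s_def K_def using a by (simp add: xi_snoc)
        moreover have "lam ^ length (a @ a' @ [0]) = K * u"
          using a a' l2 unfolding K_def u_def by (simp add: power_add[symmetric])
        ultimately show ?thesis unfolding Ua_eq[OF lam0] al_def be_def by (simp add: algebra_simps)
      qed
      have U1: "Ua lam l (a @ a'' @ [1]) = {s + K * (xi lam a'' + (u + u * al)) <..< s + K * (xi lam a'' + (u + u * be))}"
      proof -
        have "xi lam (a @ a'' @ [1]) = s + K * (xi lam a'' + u)"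
          unfolding xi_append s_def K_def u_def using a a'' l2 pl by (simp add: xi_snoc)
        moreover have "lam ^ length (a @ a'' @ [1]) = K * u"
          using a a'' l2 unfolding K_def u_def by (simp add: power_add[symmetric])
        ultimately show ?thesis unfolding Ua_eq[OF lam0] al_def be_def by (simp add: algebra_simps)
      qed
      show ?thesis
        by (rule exI[of _ a'], rule exI[of _ a'']) (use a' a'' U0 U1 in auto)
    qed
  qed
qed

end
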